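(* For $n\ge1$, $a(n)=|D_X(A_n)|$ is odd if and only if $n=1$ or $n=2^t$ for some integer $t>1$.
   Context: For $n\ge1$ let $A_n$ be the set of even numbers $j$ with $2\le j\le n-1$. For $A\subseteq[n]$, $D_X(A)$ is the set of all linear orders $q$ on $[n]$ such that for every triple $i<j<k$: if $j\in A$ then $i$ is not ranked last among $\{i,j,k\}$ in $q$, and if $j\notin A$ then $k$ is not ranked first among $\{i,j,k\}$ in $q$. *)

theory Defs
  imports Main
begin

text \<open>A linear order on [n] = {1..n} is a relation q with linear_order_on {1..n} q
  (reflexive; (x,y) in q means x is ranked before or equal to y).
  "x ranked first among {i,j,k}" = x precedes the other two;
  "x ranked last" = the other two precede x.\<close>

definition A_n :: "nat \<Rightarrow> nat set" where
  "A_n n = {j. even j \<and> 2 \<le> j \<and> j \<le> n - 1}"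

definition D_X :: "nat \<Rightarrow> nat set \<Rightarrow> (nat \<times> nat) set set" where
  "D_X n A = {q. linear_order_on {1..n} q \<and>
     (\<forall>i j k. 1 \<le> i \<and> i < j \<and> j < k \<and> k \<le> n \<longrightarrow>
        (j \<in> A \<longrightarrow> \<not> ((j, i) \<in> q \<and> (k, i) \<in> q)) \<and>
        (j \<notin> A \<longrightarrow> \<not> ((k, i) \<in> q \<and> (k, j) \<in> q)))}"

end

theory Submission
  imports Defs "HOL-Computational_Algebra.Formal_Power_Series"
begin


fun cat :: "nat \<Rightarrow> nat" where
  "cat 0 = 1"
| "cat (Suc n) = (\<Sum>i\<le>n. cat i * cat (n - i))"

declare cat.simps(2)[simp del]

definition Lop :: "(nat \<Rightarrow> nat) \<Rightarrow> nat \<Rightarrow> nat" where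
  "Lop f s = (\<Sum>t\<in>{3..s+1}. f t)"

definition Uop :: "(nat \<Rightarrow> nat) \<Rightarrow> nat \<Rightarrow> nat" where
  "Uop f s = (s+1) * f 2 + Lop f s"

definition Cf :: "nat fps" where "Cf = Abs_fps cat"

lemma Cf_eq: "Cf = 1 + fps_X * Cf^2"
proof (rule fps_ext)
  fix n show "fps_nth Cf n = fps_nth (1 + fps_X * Cf^2) (n)"
  proof (cases n)
    case 0 then show ?thesis by (simp add: Cf_def)
  next
    case (Suc k)
    have "fps_nth (Cf^2) (k )= (\<Sum>i=0..k. cat i * cat (k - i))"
      by (simp add: power2_eq_square fps_mult_nth Cf_def)
    also have "\<dots> = cat (Suc k)" by (simp add: atLeast0AtMost cat.simps(2))
    finally show ?thesis using Suc by (simp add: Cf_def)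
  qed
qed

lemma Cf_pow: "Cf^(h+1) = 1 + fps_X * (\<Sum>i\<le>h. Cf^(i+2))"
proof (induction h)
  case 0
  have "(\<Sum>i\<le>(0::nat). Cf^(i+2)) = Cf^2" by (simp add: power2_eq_square)
  moreover have "Cf^(0+1) = Cf" by simp
  ultimately show ?case using Cf_eq by metis
next
  case (Suc h)
  have "Cf^(Suc h + 1) = Cf^(h+1) * Cf" by (simp add: mult_ac)
  also have "\<dots> = Cf^(h+1) * (1 + fps_X * Cf^2)" using Cf_eq by simp
  also have "\<dots> = Cf^(h+1) + fps_X * Cf^(Suc h+2)"
  proof -
    have "Cf^(Suc h+2) = Cf^(h+1) * Cf^2" using power_add[of Cf "h+1" 2] by (simp only: Suc_eq_plus1 add.assoc) 
    then show ?thesis by (simp only: distrib_left mult_1_right mult.left_commute[of "Cf^(h+1)" fps_X])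
  qed
  also have "\<dots> = (1 + fps_X * (\<Sum>i\<le>h. Cf^(i+2))) + fps_X * Cf^(Suc h+2)"
    by (simp only: Suc.IH)
  also have "\<dots> = 1 + fps_X * (\<Sum>i\<le>Suc h. Cf^(i+2))"
    by (simp only: sum.atMost_Suc distrib_left add.assoc)
  finally show ?case .
qed

lemma Lop_Suc: "(Lop ^^ Suc j) f s = (\<Sum>t\<in>{3..s+1}. (Lop ^^ j) f t)"
  by (simp add: Lop_def)

lemma Lop_one: "s \<ge> 2 \<Longrightarrow> (Lop ^^ j) (\<lambda>_. 1) s = fps_nth (Cf^(s-1)) (j)"
proof (induction j arbitrary: s)
  case 0 then show ?case by (simp add: fps_power_zeroth Cf_def)
next
  case (Suc j)
  have "(Lop ^^ Suc j) (\<lambda>_. 1) s = (\<Sum>t\<in>{3..s+1}. fps_nth (Cf^(t-1)) (j))"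
    unfolding Lop_Suc by (rule sum.cong) (use Suc.IH in auto)
  also have "\<dots> = (\<Sum>i\<le>s-2. fps_nth (Cf^(i+2)) (j))"
  proof -
    have "(\<Sum>t\<in>{3..s+1}. fps_nth (Cf^(t-1)) (j)) = (\<Sum>i\<in>{0..s-2}. fps_nth (Cf^(i+3-1)) (j))"
      using Suc.prems
      by (intro sum.reindex_bij_witness[where j="\<lambda>t. t-3" and i="\<lambda>i. i+3"]) auto
    then show ?thesis by (simp add: atLeast0AtMost)
  qed
  also have "\<dots> = fps_nth (Cf^(s-2+1)) (Suc j)"
    by (simp only: Cf_pow) (simp add: fps_sum_nth)
  also have "s-2+1 = s-1" using Suc.prems by simp
  finally show ?case by simp
qed

lemma Lop_one_2: "(Lop ^^ j) (\<lambda>_. 1) 2 = cat j"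
  using Lop_one[of 2 j] by (simp add: Cf_def)



lemma Lop_add: "(Lop ^^ j) (\<lambda>s. f s + g s) s = (Lop ^^ j) f s + (Lop ^^ j) g s"
proof (induction j arbitrary: s)
  case 0 then show ?case by simp
next
  case (Suc j) then show ?case by (simp only: Lop_Suc sum.distrib)
qed

lemma Lop_mult: "(Lop ^^ j) (\<lambda>s. c * f s) s = c * (Lop ^^ j) f s"
proof (induction j arbitrary: s)
  case 0 then show ?case by simp
next
  case (Suc j) then show ?case by (simp only: Lop_Suc sum_distrib_left)
qed

lemma Lop_cong: "(\<And>t. t \<ge> 2 \<Longrightarrow> f t = g t) \<Longrightarrow> s \<ge> 2 \<Longrightarrow> (Lop ^^ j) f s = (Lop ^^ j) g s"
proof (induction j arbitrary: s)
  case 0 then show ?case by simp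
next
  case (Suc j) then show ?case unfolding Lop_Suc by (intro sum.cong) auto
qed

lemma Lop_const1: "Lop (\<lambda>_. 1) s = s - 1"
  by (simp add: Lop_def)

lemma Lop_e: "(Lop ^^ j) (\<lambda>s. s + 1) 2 = cat (j+1) + 2 * cat j"
proof -
  have "(Lop ^^ j) (\<lambda>s. s + 1) 2 = (Lop ^^ j) (\<lambda>s. Lop (\<lambda>_. 1) s + 2 * 1) 2"
    by (rule Lop_cong) (auto simp: Lop_def)
  also have "\<dots> = (Lop ^^ j) (Lop (\<lambda>_. 1)) 2 + 2 * (Lop ^^ j) (\<lambda>_. 1) 2"
    by (simp only: Lop_add Lop_mult)
  also have "(Lop ^^ j) (Lop (\<lambda>_. 1)) 2 = (Lop ^^ Suc j) (\<lambda>_. 1) 2"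
    by (simp only: funpow_Suc_right comp_def)
  finally show ?thesis using Lop_one_2[of "Suc j"] Lop_one_2[of j] by simp
qed

lemma Lop_d: "(Lop ^^ j) (\<lambda>s. s) 2 = cat (j+1) + cat j"
proof -
  have "(Lop ^^ j) (\<lambda>s. s) 2 = (Lop ^^ j) (\<lambda>s. Lop (\<lambda>_. 1) s + 1) 2"
    by (rule Lop_cong) (auto simp: Lop_def)
  also have "\<dots> = (Lop ^^ j) (Lop (\<lambda>_. 1)) 2 + (Lop ^^ j) (\<lambda>_. 1) 2"
    by (simp only: Lop_add)
  also have "(Lop ^^ j) (Lop (\<lambda>_. 1)) 2 = (Lop ^^ Suc j) (\<lambda>_. 1) 2"
    by (simp only: funpow_Suc_right comp_def)
  finally show ?thesis using Lop_one_2[of "Suc j"] Lop_one_2[of j] by simp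
qed

lemma Uop_decomp:
  "(Uop ^^ j) f 2 = (Lop ^^ j) f 2 + (\<Sum>i<j. (Lop ^^ i) (\<lambda>s. s + 1) 2 * (Uop ^^ (j - 1 - i)) f 2)"
proof (induction j arbitrary: f)
  case 0 then show ?case by simp
next
  case (Suc j)
  have "(Uop ^^ Suc j) f 2 = (Uop ^^ j) (Uop f) 2"
    by (simp only: funpow_Suc_right comp_def)
  also have "\<dots> = (Lop ^^ j) (Uop f) 2 + (\<Sum>i<j. (Lop ^^ i) (\<lambda>s. s + 1) 2 * (Uop ^^ (j - 1 - i)) (Uop f) 2)"
    by (rule Suc.IH)
  also have "(Lop ^^ j) (Uop f) 2 = f 2 * (Lop ^^ j) (\<lambda>s. s + 1) 2 + (Lop ^^ Suc j) f 2"
  proof -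
    have "(Lop ^^ j) (Uop f) 2 = (Lop ^^ j) (\<lambda>s. f 2 * (s + 1) + Lop f s) 2"
      by (rule Lop_cong) (auto simp: Uop_def)
    also have "\<dots> = f 2 * (Lop ^^ j) (\<lambda>s. s + 1) 2 + (Lop ^^ j) (Lop f) 2"
      by (simp only: Lop_add Lop_mult)
    also have "(Lop ^^ j) (Lop f) 2 = (Lop ^^ Suc j) f 2"
      by (simp only: funpow_Suc_right comp_def)
    finally show ?thesis .
  qed
  also have "(\<Sum>i<j. (Lop ^^ i) (\<lambda>s. s + 1) 2 * (Uop ^^ (j - 1 - i)) (Uop f) 2)
     = (\<Sum>i<j. (Lop ^^ i) (\<lambda>s. s + 1) 2 * (Uop ^^ (Suc j - 1 - i)) f 2)"
  proof (rule sum.cong)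
    fix i assume "i \<in> {..<j}"
    then have "Suc j - 1 - i = Suc (j - 1 - i)" by auto
    then show "(Lop ^^ i) (\<lambda>s. s + 1) 2 * (Uop ^^ (j - 1 - i)) (Uop f) 2
      = (Lop ^^ i) (\<lambda>s. s + 1) 2 * (Uop ^^ (Suc j - 1 - i)) f 2"
      by (simp only: funpow_Suc_right comp_def)
  qed simp
  finally show ?case by (simp add: algebra_simps)
qed

definition bb :: "nat \<Rightarrow> nat" where "bb j = (Uop ^^ j) (\<lambda>s. s) 2"

lemma bb0: "bb 0 = 2" by (simp add: bb_def)

lemma bb_rec: "bb j = cat (j+1) + cat j + (\<Sum>i<j. (cat (i+1) + 2 * cat i) * bb (j - 1 - i))"
  unfolding bb_def by (subst Uop_decomp) (simp only: Lop_d Lop_e)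

lemma cat_split: "cat (Suc k + 1) = 2 * cat (Suc k) + (\<Sum>i<k. cat (i+1) * cat (k - i))"
proof -
  have "cat (Suc k + 1) = (\<Sum>i\<le>Suc k. cat i * cat (Suc k - i))" by (simp add: cat.simps(2))
  also have "\<dots> = cat 0 * cat (Suc k) + (\<Sum>i\<le>k. cat (Suc i) * cat (k - i))"
    by (simp only: sum.atMost_Suc_shift) simp
  also have "(\<Sum>i\<le>k. cat (Suc i) * cat (k - i)) = (\<Sum>i<k. cat (Suc i) * cat (k - i)) + cat (Suc k) * cat 0"
    by (simp add: lessThan_Suc_atMost[symmetric])
  finally show ?thesis by simp
qed

lemma bb_parity: "j \<ge> 1 \<Longrightarrow> bb j mod 2 = cat j mod 2"
proof (induction j rule: less_induct)
  case (less j)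
  obtain k where k: "j = Suc k" using less.prems by (cases j) auto
  let ?X = "\<Sum>i<k. cat (i+1) * cat (k - i)"
  let ?S = "\<Sum>i<k. (cat (i+1) + 2 * cat i) * bb (k - i)"
  have eqS: "(\<Sum>i<j. (cat (i+1) + 2 * cat i) * bb (j - 1 - i)) = ?S + (cat j + 2 * cat k) * 2"
    unfolding k by (simp add: bb0)
  have eqX: "?S mod 2 = ?X mod 2"
  proof -
    have "?S mod 2 = (\<Sum>i<k. ((cat (i+1) + 2 * cat i) * bb (k - i)) mod 2) mod 2"
      by (simp add: mod_sum_eq)
    also have "\<dots> = (\<Sum>i<k. (cat (i+1) * cat (k - i)) mod 2) mod 2"
    proof -
      have pt: "((cat (i+1) + 2 * cat i) * bb (k - i)) mod 2 = (cat (i+1) * cat (k - i)) mod 2"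
        if "i < k" for i
      proof -
        have ih: "bb (k - i) mod 2 = cat (k - i) mod 2"
          using that k by (intro less.IH) auto
        have e: "((cat (i+1) + 2 * cat i) * bb (k - i)) = cat (i+1) * bb (k - i) + 2 * (cat i * bb (k - i))"
          by (simp add: algebra_simps)
        have "((cat (i+1) + 2 * cat i) * bb (k - i)) mod 2 = (cat (i+1) * bb (k - i)) mod 2"
          unfolding e by simp
        also have "\<dots> = ((cat (i+1) mod 2) * (bb (k - i) mod 2)) mod 2"
          by (simp add: mod_mult_eq)
        also have "\<dots> = ((cat (i+1) mod 2) * (cat (k - i) mod 2)) mod 2" using ih by simp
        also have "\<dots> = (cat (i+1) * cat (k - i)) mod 2" by (simp add: mod_mult_eq)
        finally show ?thesis .
      qed
      have "(\<Sum>i<k. ((cat (i+1) + 2 * cat i) * bb (k - i)) mod 2)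
          = (\<Sum>i<k. (cat (i+1) * cat (k - i)) mod 2)"
        by (rule sum.cong[OF refl], rule pt) simp
      then show ?thesis by simp
    qed
    also have "\<dots> = ?X mod 2" by (simp add: mod_sum_eq)
    finally show ?thesis .
  qed
  have s1: "bb j = (cat (j+1) + cat j + ?S) + 2 * (cat j + 2 * cat k)"
    using bb_rec[of j] eqS by simp
  have "bb j mod 2 = (cat (j+1) + cat j + ?S) mod 2"
    unfolding s1 by (rule mod_mult_self2)
  also have "\<dots> = (cat (j+1) + cat j + ?S mod 2) mod 2" by (simp add: mod_add_right_eq)
  also have "\<dots> = (cat (j+1) + cat j + ?X mod 2) mod 2" using eqX by simp
  also have "\<dots> = (cat (j+1) + cat j + ?X) mod 2" by (simp add: mod_add_right_eq)
  also have "\<dots> = (2 * (cat j + ?X) + cat j) mod 2"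
    using cat_split[of k] unfolding k by (simp add: algebra_simps)
  also have "\<dots> = cat j mod 2" by (rule mod_mult_self4)
  finally show ?case .
qed



lemma symsum_mod2:
  fixes f :: "nat \<Rightarrow> nat"
  shows "(\<Sum>i\<le>n. f i * f (n - i)) mod 2 = (if even n then f (n div 2) mod 2 else 0)"
proof -
  define g where "g i = f i * f (n - i)" for i
  define A where "A = {i. 2 * i < n}"
  define B where "B = {i. i \<le> n \<and> n < 2 * i}"
  define M where "M = {i. 2 * i = n}"
  have AB: "{..n} = (A \<union> B) \<union> M" by (auto simp: A_def B_def M_def)
  have fin: "finite A" "finite B" "finite M"
    by (auto simp: A_def B_def M_def intro: finite_subset[of _ "{..n}"])
  have disj: "(A \<union> B) \<inter> M = {}" "A \<inter> B = {}" by (auto simp: A_def B_def M_def)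
  have BA: "sum g B = sum g A"
  proof (rule sum.reindex_bij_witness[where i="\<lambda>i. n - i" and j="\<lambda>i. n - i"])
    show "\<And>a. a \<in> B \<Longrightarrow> g (n - a) = g a" by (auto simp: g_def B_def)
  qed (auto simp: A_def B_def)
  have "sum g {..n} = sum g A + sum g B + sum g M"
    unfolding AB using fin disj by (simp add: sum.union_disjoint)
  also have "\<dots> = 2 * sum g A + sum g M" using BA by simp
  finally have e: "sum g {..n} = 2 * sum g A + sum g M" .
  have gM: "sum g M = (if even n then g (n div 2) else 0)"
  proof (cases "even n")
    case True
    then have "M = {n div 2}" by (auto simp: M_def)
    then show ?thesis using True by simp
  next
    case False
    then have "M = {}" by (auto simp: M_def)
    then show ?thesis using False by simp
  qed
  have sq: "(x * x) mod 2 = x mod 2" for x :: nat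
  proof -
    have "x mod 2 = 0 \<or> x mod 2 = 1" by auto
    moreover have "(x * x) mod 2 = ((x mod 2) * (x mod 2)) mod 2" by (simp add: mod_mult_eq)
    ultimately show ?thesis by auto
  qed
  have "(\<Sum>i\<le>n. f i * f (n - i)) mod 2 = sum g M mod 2"
    using e by (simp add: g_def)
  also have "\<dots> = (if even n then f (n div 2) mod 2 else 0)"
  proof (cases "even n")
    case True
    then have "n - n div 2 = n div 2" by auto
    then show ?thesis using True gM sq by (simp add: g_def)
  qed (simp add: gM)
  finally show ?thesis .
qed

lemma cat_Suc_mod2: "cat (Suc n) mod 2 = (if even n then cat (n div 2) mod 2 else 0)"
  by (simp only: cat.simps(2) symsum_mod2)

lemma cat_parity: "odd (cat j) \<longleftrightarrow> (\<exists>t. j + 1 = 2 ^ t)"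
proof (induction j rule: less_induct)
  case (less j)
  show ?case
  proof (cases j)
    case 0
    then show ?thesis by (auto intro: exI[of _ 0])
  next
    case (Suc n)
    show ?thesis
    proof (cases "even n")
      case True
      then obtain k where n: "n = 2 * k" by blast
      have "odd (cat j) \<longleftrightarrow> odd (cat k)"
        using cat_Suc_mod2[of n] True n Suc by (simp add: odd_iff_mod_2_eq_one)
      also have "\<dots> \<longleftrightarrow> (\<exists>t. k + 1 = 2 ^ t)" using less.IH[of k] Suc n by simp
      also have "\<dots> \<longleftrightarrow> (\<exists>t. j + 1 = 2 ^ t)"
      proof
        assume "\<exists>t. k + 1 = 2 ^ t"
        then obtain t where "k + 1 = 2 ^ t" by blast
        then have "j + 1 = 2 ^ Suc t" using Suc n by simp
        then show "\<exists>t. j + 1 = 2 ^ t" by blast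
      next
        assume "\<exists>t. j + 1 = 2 ^ t"
        then obtain t where t: "j + 1 = 2 ^ t" by blast
        have "t \<noteq> 0" using t Suc by (cases t) auto
        then obtain u where u: "t = Suc u" by (cases t) auto
        have "k + 1 = 2 ^ u" using t u Suc n by simp
        then show "\<exists>t. k + 1 = 2 ^ t" by blast
      qed
      finally show ?thesis .
    next
      case False
      have "even (cat j)"
        using cat_Suc_mod2[of n] False Suc by (simp add: even_iff_mod_2_eq_zero)
      moreover have "\<not> (\<exists>t. j + 1 = 2 ^ t)"
      proof
        assume "\<exists>t. j + 1 = 2 ^ t"
        then obtain t where t: "j + 1 = 2 ^ t" by blast
        have "odd (j + 1)" using False Suc by simp
        then have o: "odd ((2::nat) ^ t)" unfolding t .
        have "t = 0"
        proof (rule ccontr)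
          assume "t \<noteq> 0" then have "even ((2::nat) ^ t)" by simp
          then show False using o by simp
        qed
        then show False using t Suc by simp
      qed
      ultimately show ?thesis by simp
    qed
  qed
qed

definition op :: "nat \<Rightarrow> (nat \<Rightarrow> nat) \<Rightarrow> nat \<Rightarrow> nat" where
  "op k f s = (if even k then (s - 1) * f 1 + f (s + 1) else f 2 + (\<Sum>r\<in>{1..<s}. f (r + 1)))"

primrec it :: "nat \<Rightarrow> (nat \<Rightarrow> nat) \<Rightarrow> nat" where
  "it 0 f = f 2"
| "it (Suc m) f = (if m = 0 then f 2 else it m (op (Suc m) f))"

lemma sum_shift_aux: "(\<Sum>r\<in>{1..<(s::nat)+1}. (f::nat\<Rightarrow>nat) (r + 1)) = (if s = 0 then 0 else f 2 + (\<Sum>t\<in>{3..s+1}. f t))"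
proof (induction s)
  case 0 then show ?case by simp
next
  case (Suc s)
  show ?case
  proof (cases "s = 0")
    case True then show ?thesis by (simp add: numeral_2_eq_2)
  next
    case False
    have "{3..Suc s + 1} = insert (Suc s + 1) {3..s+1}" using False by auto
    then have "(\<Sum>t\<in>{3..Suc s + 1}. f t) = f (Suc s + 1) + (\<Sum>t\<in>{3..s+1}. f t)" by simp
    then show ?thesis using Suc False by simp
  qed
qed

lemma op_even: "even k \<Longrightarrow> op k g s = (s - 1) * g 1 + g (s + 1)"
  by (simp add: op_def)

lemma op_odd: "odd k \<Longrightarrow> op k g s = g 2 + (\<Sum>r\<in>{1..<s}. g (r + 1))"
  by (simp add: op_def)

lemma op_U: "even k \<Longrightarrow> op k (op (Suc k) f) = Uop f"
proof (rule ext)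
  fix s assume k: "even k"
  have o1: "op (Suc k) f 1 = f 2" using k by (simp add: op_def)
  have o2: "op (Suc k) f (s + 1) = f 2 + (\<Sum>r\<in>{1..<s+1}. f (r + 1))" using k by (simp add: op_def)
  have "op k (op (Suc k) f) s = (s - 1) * op (Suc k) f 1 + op (Suc k) f (s + 1)"
    by (rule op_even[OF k])
  also have "\<dots> = (s - 1) * f 2 + (f 2 + (\<Sum>r\<in>{1..<s+1}. f (r + 1)))" by (simp only: o1 o2)
  also have "\<dots> = Uop f s"
  proof (cases "s = 0")
    case True then show ?thesis by (simp add: Uop_def Lop_def)
  next
    case False
    have sa: "(\<Sum>r\<in>{1..<s+1}. f (r+1)) = f 2 + (\<Sum>t\<in>{3..s+1}. f t)"
      using sum_shift_aux[where s=s and f=f] by (simp only: False if_False simp_thms)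
    obtain s' where s': "s = Suc s'" using False by (cases s) auto
    show ?thesis unfolding sa Uop_def Lop_def unfolding s' by (simp add: algebra_simps)
  qed
  finally show "op k (op (Suc k) f) s = Uop f s" .
qed

lemma it_Suc: "m \<ge> 1 \<Longrightarrow> it (Suc m) f = it m (op (Suc m) f)"
  by (cases m) auto

declare it.simps(2)[simp del]

lemma it_odd: "it (2 * m + 1) g = (Uop ^^ m) g 2"
proof (induction m arbitrary: g)
  case 0 then show ?case by (simp add: it.simps)
next
  case (Suc m)
  have e1: "2 * Suc m + 1 = Suc (2 * m + 2)" "2 * m + 2 = Suc (2 * m + 1)" by simp_all
  have "it (2 * Suc m + 1) g = it (2 * m + 1) (op (2 * m + 2) (op (Suc (2 * m + 2)) g))"
    unfolding e1 by (simp only: it_Suc[of "Suc (2*m+1)"] it_Suc[of "2*m+1"] le_add2 Suc_le_mono)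
  also have "op (2 * m + 2) (op (Suc (2 * m + 2)) g) = Uop g" by (rule op_U) simp
  also have "it (2 * m + 1) (Uop g) = (Uop ^^ Suc m) g 2"
    using Suc.IH by (simp only: funpow_Suc_right comp_def)
  finally show ?case .
qed

lemma it_even: "it (2 * m + 2) g = (Uop ^^ m) (op (2 * m + 2) g) 2"
proof -
  have e1: "2 * m + 2 = Suc (2 * m + 1)" by simp
  have "it (2 * m + 2) g = it (2 * m + 1) (op (2 * m + 2) g)"
    unfolding e1 by (rule it_Suc) simp
  then show ?thesis by (simp only: it_odd)
qed

lemma Uop_cong: "(\<And>t. t \<ge> 2 \<Longrightarrow> f t = g t) \<Longrightarrow> Uop f = Uop g"
  unfolding Uop_def Lop_def by (intro ext) auto

lemma Uop_pow_cong:
  assumes h: "\<And>t. t \<ge> 2 \<Longrightarrow> f t = g t"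
  shows "(Uop ^^ m) f 2 = (Uop ^^ m) g 2"
proof (cases m)
  case 0 then show ?thesis using h by simp
next
  case (Suc m')
  show ?thesis unfolding Suc funpow_Suc_right comp_def using Uop_cong[OF h] by simp
qed

lemma Uop_mult: "(Uop ^^ m) (\<lambda>s. c * f s) s = c * (Uop ^^ m) f s"
proof (induction m arbitrary: f)
  case 0 then show ?case by simp
next
  case (Suc m)
  have "Uop (\<lambda>s. c * f s) s = c * Uop f s" for s
    unfolding Uop_def Lop_def sum_distrib_left[symmetric] by (simp add: algebra_simps)
  then have "Uop (\<lambda>s. c * f s) = (\<lambda>s. c * Uop f s)" by (rule ext)
  then show ?case using Suc.IH by (simp only: funpow_Suc_right comp_def)
qed

lemma a_even: "it (2 * m + 2) (\<lambda>_. 1) = bb m"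
  unfolding it_even bb_def by (rule Uop_pow_cong) (simp add: op_def)

lemma a_odd: "it (2 * m + 3) (\<lambda>_. 1) = 2 * bb m"
proof -
  have e: "2 * m + 3 = 2 * Suc m + 1" by simp
  have "it (2 * m + 3) (\<lambda>_. 1) = (Uop ^^ Suc m) (\<lambda>_. 1) 2"
    unfolding e by (rule it_odd)
  also have "\<dots> = (Uop ^^ m) (Uop (\<lambda>_. 1)) 2" by (simp only: funpow_Suc_right comp_def)
  also have "\<dots> = (Uop ^^ m) (\<lambda>s. 2 * s) 2"
    by (rule Uop_pow_cong) (simp add: Uop_def Lop_def)
  also have "\<dots> = 2 * bb m" unfolding bb_def by (rule Uop_mult)
  finally show ?thesis .
qed

theorem it_parity:
  assumes "n \<ge> 1"
  shows "odd (it n (\<lambda>_. 1)) \<longleftrightarrow> (n = 1 \<or> (\<exists>t::nat. t > 1 \<and> n = 2 ^ t))"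
proof -
  consider "n = 1" | m where "n = 2 * m + 2" | m where "n = 2 * m + 3"
  proof -
    have "n = 1 \<or> (\<exists>m. n = 2 * m + 2) \<or> (\<exists>m. n = 2 * m + 3)" using assms by presburger
    then show "(n = 1 \<Longrightarrow> thesis) \<Longrightarrow> (\<And>m. n = 2 * m + 2 \<Longrightarrow> thesis) \<Longrightarrow> (\<And>m. n = 2 * m + 3 \<Longrightarrow> thesis) \<Longrightarrow> thesis" by blast
  qed
  then show ?thesis
  proof cases
    case 1 then show ?thesis by (simp add: it.simps)
  next
    case (2 m)
    show ?thesis
    proof (cases "m = 0")
      case True
      have n2: "n = 2" using 2 True by simp
      have neg: "\<not> (\<exists>t::nat. t > 1 \<and> n = 2 ^ t)"
      proof
        assume "\<exists>t::nat. t > 1 \<and> n = 2 ^ t"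
        then obtain t :: nat where "t > 1" "n = 2 ^ t" by blast
        moreover have "(2::nat) ^ t \<ge> 2 ^ 2" using \<open>t > 1\<close> by (intro power_increasing) auto
        ultimately show False using n2 by simp
      qed
      have "it n (\<lambda>_. 1) = 2" using 2 True a_even[of 0] bb0 by simp
      then show ?thesis using neg n2 by simp
    next
      case False
      have "odd (it n (\<lambda>_. 1)) \<longleftrightarrow> odd (cat m)"
        using 2 a_even[of m] bb_parity[of m] False by (simp add: odd_iff_mod_2_eq_one)
      also have "\<dots> \<longleftrightarrow> (\<exists>t. m + 1 = 2 ^ t)" by (rule cat_parity)
      also have "\<dots> \<longleftrightarrow> (n = 1 \<or> (\<exists>t::nat. t > 1 \<and> n = 2 ^ t))"
      proof
        assume "\<exists>t. m + 1 = 2 ^ t"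
        then obtain t where t: "m + 1 = 2 ^ t" by blast
        have "t \<noteq> 0" using t False by (cases t) auto
        then have "Suc t > 1" "n = 2 ^ Suc t" using t 2 by auto
        then show "n = 1 \<or> (\<exists>t::nat. t > 1 \<and> n = 2 ^ t)" by blast
      next
        assume "n = 1 \<or> (\<exists>t::nat. t > 1 \<and> n = 2 ^ t)"
        then obtain t :: nat where t: "t > 1" "n = 2 ^ t" using 2 by auto
        then obtain u where u: "t = Suc u" by (cases t) auto
        have "m + 1 = 2 ^ u" using t u 2 by simp
        then show "\<exists>t. m + 1 = 2 ^ t" by blast
      qed
      finally show ?thesis .
    qed
  next
    case (3 m)
    have "even (it n (\<lambda>_. 1))" using 3 a_odd[of m] by simp
    moreover have "\<not> (n = 1 \<or> (\<exists>t::nat. t > 1 \<and> n = 2 ^ t))"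
    proof
      assume "n = 1 \<or> (\<exists>t::nat. t > 1 \<and> n = 2 ^ t)"
      then obtain t :: nat where t: "t > 1" "n = 2 ^ t" using 3 by auto
      have "even n" using t by (cases t) auto
      then show False using 3 by simp
    qed
    ultimately show ?thesis by simp
  qed
qed



definition Rk :: "nat \<Rightarrow> (nat \<Rightarrow> nat) set" where
  "Rk n = {r. (\<forall>x. x \<notin> {1..n} \<longrightarrow> r x = 0) \<and> bij_betw r {1..n} {1..n}}"

definition ins :: "nat \<Rightarrow> (nat \<Rightarrow> nat) \<Rightarrow> nat \<Rightarrow> nat \<Rightarrow> nat" where
  "ins m r p = (\<lambda>x. if 1 \<le> x \<and> x \<le> m then (if r x \<le> p then r x else r x + 1)
                     else if x = Suc m then p + 1 else 0)"

definition restr :: "nat \<Rightarrow> (nat \<Rightarrow> nat) \<Rightarrow> nat \<Rightarrow> nat" where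
  "restr m r = (\<lambda>x. if 1 \<le> x \<and> x \<le> m then (if r (Suc m) < r x then r x - 1 else r x) else 0)"

lemma Rk_range: "r \<in> Rk n \<Longrightarrow> 1 \<le> x \<Longrightarrow> x \<le> n \<Longrightarrow> 1 \<le> r x \<and> r x \<le> n"
  unfolding Rk_def bij_betw_def by auto

lemma Rk_inj: "r \<in> Rk n \<Longrightarrow> 1 \<le> x \<Longrightarrow> x \<le> n \<Longrightarrow> 1 \<le> y \<Longrightarrow> y \<le> n \<Longrightarrow> r x = r y \<Longrightarrow> x = y"
proof -
  assume a: "r \<in> Rk n" "1 \<le> x" "x \<le> n" "1 \<le> y" "y \<le> n" "r x = r y"
  have "inj_on r {1..n}" using a(1) by (simp add: Rk_def bij_betw_def)
  moreover have "x \<in> {1..n}" "y \<in> {1..n}" using a by auto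
  ultimately show "x = y" using a(6) by (blast dest: inj_onD)
qed

lemma Rk_surj: "r \<in> Rk n \<Longrightarrow> 1 \<le> v \<Longrightarrow> v \<le> n \<Longrightarrow> \<exists>x. 1 \<le> x \<and> x \<le> n \<and> r x = v"
proof -
  assume r: "r \<in> Rk n" and v: "1 \<le> v" "v \<le> n"
  have "r ` {1..n} = {1..n}" using r unfolding Rk_def bij_betw_def by blast
  then have "v \<in> r ` {1..n}" using v by simp
  then show ?thesis by auto
qed

lemma Rk_out: "r \<in> Rk n \<Longrightarrow> \<not> (1 \<le> x \<and> x \<le> n) \<Longrightarrow> r x = 0"
  unfolding Rk_def by auto

lemma Rk_intro:
  assumes "\<And>x. \<not> (1 \<le> x \<and> x \<le> n) \<Longrightarrow> r x = 0"
    and "\<And>x. 1 \<le> x \<Longrightarrow> x \<le> n \<Longrightarrow> 1 \<le> r x \<and> r x \<le> n"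
    and "\<And>x y. 1 \<le> x \<Longrightarrow> x \<le> n \<Longrightarrow> 1 \<le> y \<Longrightarrow> y \<le> n \<Longrightarrow> r x = r y \<Longrightarrow> x = y"
  shows "r \<in> Rk n"
proof -
  have inj: "inj_on r {1..n}" using assms(3) by (auto simp: inj_on_def)
  have sub: "r ` {1..n} \<subseteq> {1..n}" using assms(2) by auto
  have "card (r ` {1..n}) = card {1..n}" using inj by (rule card_image)
  then have "r ` {1..n} = {1..n}" using sub by (intro card_subset_eq) auto
  then have "bij_betw r {1..n} {1..n}" using inj by (simp add: bij_betw_def)
  then show ?thesis using assms(1) by (auto simp: Rk_def)
qed

lemma ins_val: "1 \<le> x \<Longrightarrow> x \<le> m \<Longrightarrow> ins m r p x = (if r x \<le> p then r x else r x + 1)"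
  by (simp add: ins_def)

lemma ins_top: "ins m r p (Suc m) = p + 1"
  by (simp add: ins_def)

lemma ins_out: "\<not> (1 \<le> x \<and> x \<le> Suc m) \<Longrightarrow> ins m r p x = 0"
  unfolding ins_def by auto

lemma ins_Rk:
  assumes r: "r \<in> Rk m" and p: "p \<le> m"
  shows "ins m r p \<in> Rk (Suc m)"
proof (rule Rk_intro)
  fix x assume "\<not> (1 \<le> x \<and> x \<le> Suc m)" then show "ins m r p x = 0" by (rule ins_out)
next
  fix x assume x: "1 \<le> x" "x \<le> Suc m"
  show "1 \<le> ins m r p x \<and> ins m r p x \<le> Suc m"
  proof (cases "x = Suc m")
    case True then show ?thesis using p by (simp add: ins_top)
  next
    case False
    then have "x \<le> m" using x by simp
    then show ?thesis using Rk_range[OF r x(1)] x(1) by (simp add: ins_val)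
  qed
next
  fix x y assume xy: "1 \<le> x" "x \<le> Suc m" "1 \<le> y" "y \<le> Suc m" "ins m r p x = ins m r p y"
  show "x = y"
  proof (cases "x = Suc m")
    case True
    show ?thesis
    proof (rule ccontr)
      assume "x \<noteq> y"
      then have y: "y \<le> m" using True xy by simp
      have "ins m r p y = p + 1" using xy True by (simp add: ins_top)
      then show False using y xy(3) by (simp add: ins_val split: if_splits)
    qed
  next
    case False
    then have x: "x \<le> m" using xy by simp
    show ?thesis
    proof (cases "y = Suc m")
      case True
      have "ins m r p x = p + 1" using xy True by (simp add: ins_top)
      then show ?thesis using x xy(1) by (simp add: ins_val split: if_splits)
    next
      case False2: False
      then have y: "y \<le> m" using xy by simp
      have "r x = r y" using xy(5) x y xy(1,3) by (simp add: ins_val split: if_splits)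
      then show ?thesis using Rk_inj[OF r xy(1) x xy(3) y] by simp
    qed
  qed
qed

lemma restr_val: "1 \<le> x \<Longrightarrow> x \<le> m \<Longrightarrow> restr m r x = (if r (Suc m) < r x then r x - 1 else r x)"
  by (simp add: restr_def)

lemma restr_out: "\<not> (1 \<le> x \<and> x \<le> m) \<Longrightarrow> restr m r x = 0"
  unfolding restr_def by auto

lemma Rk_ne_top: "r \<in> Rk (Suc m) \<Longrightarrow> 1 \<le> x \<Longrightarrow> x \<le> m \<Longrightarrow> r x \<noteq> r (Suc m)"
  using Rk_inj[of r "Suc m" x "Suc m"] by auto

lemma restr_Rk:
  assumes r: "r \<in> Rk (Suc m)"
  shows "restr m r \<in> Rk m"
proof (rule Rk_intro)
  fix x assume "\<not> (1 \<le> x \<and> x \<le> m)" then show "restr m r x = 0" by (rule restr_out)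
next
  fix x assume x: "1 \<le> x" "x \<le> m"
  have ne: "r x \<noteq> r (Suc m)" using Rk_ne_top[OF r x] .
  have a: "1 \<le> r x" "r x \<le> Suc m" using Rk_range[OF r x(1)] x by auto
  have b: "1 \<le> r (Suc m)" "r (Suc m) \<le> Suc m" using Rk_range[OF r, of "Suc m"] by auto
  show "1 \<le> restr m r x \<and> restr m r x \<le> m"
    using ne a b x by (auto simp add: restr_val)
next
  fix x y assume xy: "1 \<le> x" "x \<le> m" "1 \<le> y" "y \<le> m" "restr m r x = restr m r y"
  have "r x \<noteq> r (Suc m)" using Rk_ne_top[OF r xy(1,2)] .
  moreover have "r y \<noteq> r (Suc m)" using Rk_ne_top[OF r xy(3,4)] .
  ultimately have "r x = r y" using xy by (simp add: restr_val split: if_splits)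
  then show "x = y" using Rk_inj[OF r, of x y] xy by simp
qed

lemma restr_ins:
  assumes r: "r \<in> Rk m" and p: "p \<le> m"
  shows "restr m (ins m r p) = r"
proof (rule ext)
  fix x
  show "restr m (ins m r p) x = r x"
  proof (cases "1 \<le> x \<and> x \<le> m")
    case True
    then show ?thesis by (simp add: restr_val ins_val ins_top)
  next
    case False
    then show ?thesis using Rk_out[OF r False] by (simp add: restr_out)
  qed
qed

lemma ins_restr:
  assumes r: "r \<in> Rk (Suc m)"
  shows "ins m (restr m r) (r (Suc m) - 1) = r" "r (Suc m) - 1 \<le> m"
proof -
  have c: "1 \<le> r (Suc m)" "r (Suc m) \<le> Suc m" using Rk_range[OF r, of "Suc m"] by auto
  then show "r (Suc m) - 1 \<le> m" by simp
  show "ins m (restr m r) (r (Suc m) - 1) = r"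
  proof (rule ext)
    fix x
    show "ins m (restr m r) (r (Suc m) - 1) x = r x"
    proof (cases "1 \<le> x \<and> x \<le> m")
      case True
      have "r x \<noteq> r (Suc m)" using Rk_ne_top[OF r] True by simp
      then show ?thesis using True c by (auto simp: ins_val restr_val)
    next
      case False
      show ?thesis
      proof (cases "x = Suc m")
        case True then show ?thesis using c by (simp add: ins_top)
      next
        case False2: False
        then have "\<not> (1 \<le> x \<and> x \<le> Suc m)" using False by auto
        then show ?thesis using Rk_out[OF r] by (simp add: ins_out)
      qed
    qed
  qed
qed

definition valid :: "nat \<Rightarrow> (nat \<Rightarrow> nat) \<Rightarrow> bool" where
  "valid n r \<longleftrightarrow> (\<forall>i j k. 1 \<le> i \<and> i < j \<and> j < k \<and> k \<le> n \<longrightarrow>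
     (even j \<longrightarrow> \<not> (r j < r i \<and> r k < r i)) \<and> (odd j \<longrightarrow> \<not> (r k < r i \<and> r k < r j)))"

definition good :: "(nat \<Rightarrow> nat) \<Rightarrow> nat \<Rightarrow> nat \<Rightarrow> bool" where
  "good r m p \<longleftrightarrow> (\<forall>i j. 1 \<le> i \<and> i < j \<and> j \<le> m \<longrightarrow>
     (odd j \<longrightarrow> min (r i) (r j) \<le> p) \<and> (even j \<longrightarrow> r j < r i \<longrightarrow> r i \<le> p))"

lemma ins_mono: "1 \<le> a \<Longrightarrow> a \<le> m \<Longrightarrow> 1 \<le> b \<Longrightarrow> b \<le> m \<Longrightarrow>
   ins m r p a < ins m r p b \<longleftrightarrow> r a < r b"
  by (simp add: ins_val)

lemma ins_topless: "1 \<le> a \<Longrightarrow> a \<le> m \<Longrightarrow> ins m r p (Suc m) < ins m r p a \<longleftrightarrow> p < r a"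
  by (simp add: ins_val ins_top)

lemma valid_ins:
  assumes r: "r \<in> Rk m" and p: "p \<le> m"
  shows "valid (Suc m) (ins m r p) \<longleftrightarrow> valid m r \<and> good r m p"
proof
  assume V: "valid (Suc m) (ins m r p)"
  have "valid m r"
    unfolding valid_def
  proof (intro allI impI)
    fix i j k assume h: "1 \<le> i \<and> i < j \<and> j < k \<and> k \<le> m"
    have "(even j \<longrightarrow> \<not> (ins m r p j < ins m r p i \<and> ins m r p k < ins m r p i)) \<and>
          (odd j \<longrightarrow> \<not> (ins m r p k < ins m r p i \<and> ins m r p k < ins m r p j))"
      using V h unfolding valid_def by (meson le_SucI)
    then show "(even j \<longrightarrow> \<not> (r j < r i \<and> r k < r i)) \<and> (odd j \<longrightarrow> \<not> (r k < r i \<and> r k < r j))"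
      using h by (simp add: ins_mono)
  qed
  moreover have "good r m p"
    unfolding good_def
  proof (intro allI impI)
    fix i j assume h: "1 \<le> i \<and> i < j \<and> j \<le> m"
    have "(even j \<longrightarrow> \<not> (ins m r p j < ins m r p i \<and> ins m r p (Suc m) < ins m r p i)) \<and>
          (odd j \<longrightarrow> \<not> (ins m r p (Suc m) < ins m r p i \<and> ins m r p (Suc m) < ins m r p j))"
      using V h unfolding valid_def by (meson le_imp_less_Suc order_refl)
    then show "(odd j \<longrightarrow> min (r i) (r j) \<le> p) \<and> (even j \<longrightarrow> r j < r i \<longrightarrow> r i \<le> p)"
      using h by (auto simp add: ins_mono ins_topless)
  qed
  ultimately show "valid m r \<and> good r m p" ..
next
  assume "valid m r \<and> good r m p"
  then have V: "valid m r" and G: "good r m p" by auto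
  show "valid (Suc m) (ins m r p)"
    unfolding valid_def
  proof (intro allI impI)
    fix i j k assume h: "1 \<le> i \<and> i < j \<and> j < k \<and> k \<le> Suc m"
    show "(even j \<longrightarrow> \<not> (ins m r p j < ins m r p i \<and> ins m r p k < ins m r p i)) \<and>
          (odd j \<longrightarrow> \<not> (ins m r p k < ins m r p i \<and> ins m r p k < ins m r p j))"
    proof (cases "k = Suc m")
      case True
      have "(odd j \<longrightarrow> min (r i) (r j) \<le> p) \<and> (even j \<longrightarrow> r j < r i \<longrightarrow> r i \<le> p)"
      proof -
        have jm: "j \<le> m" using h True by simp
        show ?thesis using G h jm unfolding good_def by blast
      qed
      then show ?thesis using h True by (auto simp add: ins_mono ins_topless)
    next
      case False
      then have k: "k \<le> m" using h by simp
      have "(even j \<longrightarrow> \<not> (r j < r i \<and> r k < r i)) \<and> (odd j \<longrightarrow> \<not> (r k < r i \<and> r k < r j))"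
        using V h k unfolding valid_def by blast
      then show ?thesis using h k by (simp add: ins_mono)
    qed
  qed
qed

definition st :: "nat \<Rightarrow> (nat \<Rightarrow> nat) \<Rightarrow> nat" where
  "st m r = card {p. p \<le> m \<and> good r m p}"

lemma good_mono: "good r m p \<Longrightarrow> p \<le> p' \<Longrightarrow> good r m p'"
  unfolding good_def
proof (intro allI impI)
  fix i j assume G: "\<forall>i j. 1 \<le> i \<and> i < j \<and> j \<le> m \<longrightarrow>
     (odd j \<longrightarrow> min (r i) (r j) \<le> p) \<and> (even j \<longrightarrow> r j < r i \<longrightarrow> r i \<le> p)"
    and pp: "p \<le> p'" and h: "1 \<le> i \<and> i < j \<and> j \<le> m"
  have "(odd j \<longrightarrow> min (r i) (r j) \<le> p) \<and> (even j \<longrightarrow> r j < r i \<longrightarrow> r i \<le> p)"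
    using G h by blast
  then show "(odd j \<longrightarrow> min (r i) (r j) \<le> p') \<and> (even j \<longrightarrow> r j < r i \<longrightarrow> r i \<le> p')"
    using pp by linarith
qed

lemma good_top: "r \<in> Rk m \<Longrightarrow> m \<le> p \<Longrightarrow> good r m p"
  unfolding good_def
proof (intro allI impI)
  fix i j assume r: "r \<in> Rk m" and mp: "m \<le> p" and h: "1 \<le> i \<and> i < j \<and> j \<le> m"
  have "r i \<le> m" using Rk_range[OF r, of i] h by simp
  then show "(odd j \<longrightarrow> min (r i) (r j) \<le> p) \<and> (even j \<longrightarrow> r j < r i \<longrightarrow> r i \<le> p)"
    using mp by (auto simp: min_def)
qed

lemma good_ins:
  assumes r: "r \<in> Rk m" and p: "p \<le> m" and G: "good r m p"
  shows "good (ins m r p) (Suc m) p' \<longleftrightarrow> good r m p' \<and>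
    (\<forall>i. 1 \<le> i \<and> i \<le> m \<longrightarrow> (odd (Suc m) \<longrightarrow> min (ins m r p i) (p + 1) \<le> p') \<and>
                              (even (Suc m) \<longrightarrow> p + 1 < ins m r p i \<longrightarrow> ins m r p i \<le> p'))"
proof -
  let ?r = "ins m r p"
  have eqv: "((odd j \<longrightarrow> min (?r i) (?r j) \<le> p') \<and> (even j \<longrightarrow> ?r j < ?r i \<longrightarrow> ?r i \<le> p'))
     \<longleftrightarrow> ((odd j \<longrightarrow> min (r i) (r j) \<le> p') \<and> (even j \<longrightarrow> r j < r i \<longrightarrow> r i \<le> p'))"
    if h: "1 \<le> i" "i < j" "j \<le> m" for i j
  proof -
    have g: "(odd j \<longrightarrow> min (r i) (r j) \<le> p) \<and> (even j \<longrightarrow> r j < r i \<longrightarrow> r i \<le> p)"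
      using G h unfolding good_def by blast
    have vi: "?r i = (if r i \<le> p then r i else r i + 1)" using h by (simp add: ins_val)
    have vj: "?r j = (if r j \<le> p then r j else r j + 1)" using h by (simp add: ins_val)
    show ?thesis using g unfolding vi vj by auto
  qed
  have top: "?r (Suc m) = p + 1" by (simp add: ins_top)
  show ?thesis
  proof
    assume A: "good ?r (Suc m) p'"
    have "good r m p'"
      unfolding good_def
    proof (intro allI impI)
      fix i j assume h: "1 \<le> i \<and> i < j \<and> j \<le> m"
      have "(odd j \<longrightarrow> min (?r i) (?r j) \<le> p') \<and> (even j \<longrightarrow> ?r j < ?r i \<longrightarrow> ?r i \<le> p')"
        using A h unfolding good_def by (meson le_SucI)
      then show "(odd j \<longrightarrow> min (r i) (r j) \<le> p') \<and> (even j \<longrightarrow> r j < r i \<longrightarrow> r i \<le> p')"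
        using eqv h by blast
    qed
    moreover have "\<forall>i. 1 \<le> i \<and> i \<le> m \<longrightarrow> (odd (Suc m) \<longrightarrow> min (?r i) (p + 1) \<le> p') \<and>
                              (even (Suc m) \<longrightarrow> p + 1 < ?r i \<longrightarrow> ?r i \<le> p')"
    proof (intro allI impI)
      fix i assume h: "1 \<le> i \<and> i \<le> m"
      have "(odd (Suc m) \<longrightarrow> min (?r i) (?r (Suc m)) \<le> p') \<and> (even (Suc m) \<longrightarrow> ?r (Suc m) < ?r i \<longrightarrow> ?r i \<le> p')"
        using A h unfolding good_def by (meson le_imp_less_Suc order_refl)
      then show "(odd (Suc m) \<longrightarrow> min (?r i) (p + 1) \<le> p') \<and> (even (Suc m) \<longrightarrow> p + 1 < ?r i \<longrightarrow> ?r i \<le> p')"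
        unfolding top .
    qed
    ultimately show "good r m p' \<and> (\<forall>i. 1 \<le> i \<and> i \<le> m \<longrightarrow> (odd (Suc m) \<longrightarrow> min (?r i) (p + 1) \<le> p') \<and>
                              (even (Suc m) \<longrightarrow> p + 1 < ?r i \<longrightarrow> ?r i \<le> p'))" ..
  next
    assume B: "good r m p' \<and> (\<forall>i. 1 \<le> i \<and> i \<le> m \<longrightarrow> (odd (Suc m) \<longrightarrow> min (?r i) (p + 1) \<le> p') \<and>
                              (even (Suc m) \<longrightarrow> p + 1 < ?r i \<longrightarrow> ?r i \<le> p'))"
    show "good ?r (Suc m) p'"
      unfolding good_def
    proof (intro allI impI)
      fix i j assume h: "1 \<le> i \<and> i < j \<and> j \<le> Suc m"
      show "(odd j \<longrightarrow> min (?r i) (?r j) \<le> p') \<and> (even j \<longrightarrow> ?r j < ?r i \<longrightarrow> ?r i \<le> p')"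
      proof (cases "j = Suc m")
        case True
        have "i \<le> m" using h True by simp
        then show ?thesis using B h True top by auto
      next
        case False
        then have jm: "j \<le> m" using h by simp
        have "(odd j \<longrightarrow> min (r i) (r j) \<le> p') \<and> (even j \<longrightarrow> r j < r i \<longrightarrow> r i \<le> p')"
          using B h jm unfolding good_def by blast
        then show ?thesis using eqv h jm by blast
      qed
    qed
  qed
qed

lemma st_ins:
  assumes r: "r \<in> Rk m" and m1: "m \<ge> 1" and p: "p \<le> m" and G: "good r m p"
  shows "st (Suc m) (ins m r p) = (if even (Suc m) then (if p < m then 1 else st m r + 1)
                                  else (if p < m then Suc m - p else 2))"
proof -
  let ?r = "ins m r p"
  let ?S' = "{p'. p' \<le> Suc m \<and> good ?r (Suc m) p'}"
  obtain i0 where i0: "1 \<le> i0" "i0 \<le> m" "r i0 = m" using Rk_surj[OF r m1] by auto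
  have rng: "1 \<le> i \<Longrightarrow> i \<le> m \<Longrightarrow> r i \<le> m" for i using Rk_range[OF r] by blast
  have iv: "1 \<le> i \<Longrightarrow> i \<le> m \<Longrightarrow> ?r i = (if r i \<le> p then r i else r i + 1)" for i
    by (rule ins_val)
  note gi = good_ins[OF r p G]
  show ?thesis
  proof (cases "even (Suc m)")
    case ev: True
    show ?thesis
    proof (cases "p < m")
      case True
      have "?S' = {Suc m}"
      proof (intro set_eqI iffI)
        fix p' assume "p' \<in> ?S'"
        then have a: "p' \<le> Suc m" and b: "good ?r (Suc m) p'" by auto
        have "p + 1 < ?r i0 \<longrightarrow> ?r i0 \<le> p'" using b i0 ev unfolding gi by blast
        moreover have "?r i0 = m + 1" using iv[OF i0(1,2)] i0 True by simp
        ultimately show "p' \<in> {Suc m}" using a True by simp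
      next
        fix p' assume "p' \<in> {Suc m}"
        then have pe: "p' = Suc m" by simp
        have "good r m p'" using good_top[OF r] pe by simp
        moreover have "?r i \<le> p'" if "1 \<le> i" "i \<le> m" for i
          using iv[OF that] rng[OF that] pe by simp
        ultimately show "p' \<in> ?S'" using pe ev unfolding gi by auto
      qed
      then show ?thesis using ev True by (simp add: st_def)
    next
      case False
      then have pm: "p = m" using p by simp
      have "?S' = {p'. p' \<le> m \<and> good r m p'} \<union> {Suc m}"
      proof (intro set_eqI iffI)
        fix p' assume "p' \<in> ?S'"
        then have a: "p' \<le> Suc m" and b: "good ?r (Suc m) p'" by auto
        have "good r m p'" using b unfolding gi by blast
        then show "p' \<in> {p'. p' \<le> m \<and> good r m p'} \<union> {Suc m}" using a by auto
      next
        fix p' assume h: "p' \<in> {p'. p' \<le> m \<and> good r m p'} \<union> {Suc m}"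
        have g: "good r m p'" using h good_top[OF r, of "Suc m"] by auto
        have a: "p' \<le> Suc m" using h by auto
        have "\<not> (p + 1 < ?r i)" if "1 \<le> i" "i \<le> m" for i
          using iv[OF that] rng[OF that] pm by simp
        then show "p' \<in> ?S'" using g a ev unfolding gi by auto
      qed
      moreover have "finite {p'. p' \<le> m \<and> good r m p'}" by simp
      moreover have "Suc m \<notin> {p'. p' \<le> m \<and> good r m p'}" by simp
      ultimately show ?thesis using ev pm by (simp add: st_def)
    qed
  next
    case od: False
    show ?thesis
    proof (cases "p < m")
      case True
      have "?S' = {Suc p..Suc m}"
      proof (intro set_eqI iffI)
        fix p' assume "p' \<in> ?S'"
        then have a: "p' \<le> Suc m" and b: "good ?r (Suc m) p'" by auto
        have "min (?r i0) (p + 1) \<le> p'" using b i0 od unfolding gi by blast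
        moreover have "?r i0 = m + 1" using iv[OF i0(1,2)] i0 True by simp
        ultimately show "p' \<in> {Suc p..Suc m}" using a True by simp
      next
        fix p' assume h: "p' \<in> {Suc p..Suc m}"
        have "good r m p'" using good_mono[OF G] h by simp
        then show "p' \<in> ?S'" using h od unfolding gi by auto
      qed
      then show ?thesis using od True by (simp add: st_def)
    next
      case False
      then have pm: "p = m" using p by simp
      have "?S' = {m, Suc m}"
      proof (intro set_eqI iffI)
        fix p' assume "p' \<in> ?S'"
        then have a: "p' \<le> Suc m" and b: "good ?r (Suc m) p'" by auto
        have "min (?r i0) (p + 1) \<le> p'" using b i0 od unfolding gi by blast
        moreover have "?r i0 = m" using iv[OF i0(1,2)] i0 pm by simp
        ultimately show "p' \<in> {m, Suc m}" using a pm by auto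
      next
        fix p' assume h: "p' \<in> {m, Suc m}"
        have g: "good r m p'" using h good_top[OF r] by auto
        have "min (?r i) (p + 1) \<le> p'" if "1 \<le> i" "i \<le> m" for i
          using iv[OF that] rng[OF that] pm h by auto
        then show "p' \<in> ?S'" using g h od unfolding gi by auto
      qed
      then show ?thesis using od pm by (simp add: st_def)
    qed
  qed
qed

lemma S_interval:
  assumes r: "r \<in> Rk m"
  shows "{p. p \<le> m \<and> good r m p} = {Suc m - st m r..m}" "1 \<le> st m r" "st m r \<le> Suc m"
proof -
  let ?S = "{p. p \<le> m \<and> good r m p}"
  have fin: "finite ?S" by simp
  have mS: "m \<in> ?S" using good_top[OF r] by simp
  then have ne: "?S \<noteq> {}" by blast
  define T where "T = Min ?S"
  have TS: "T \<in> ?S" unfolding T_def using fin ne by (rule Min_in)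
  have eq: "?S = {T..m}"
  proof (intro set_eqI iffI)
    fix x assume "x \<in> ?S"
    then show "x \<in> {T..m}" unfolding T_def using fin by auto
  next
    fix x assume "x \<in> {T..m}"
    then show "x \<in> ?S" using TS good_mono[of r m T x] by auto
  qed
  have Tm: "T \<le> m" using TS by simp
  have c: "st m r = Suc m - T" unfolding st_def eq by simp
  show "?S = {Suc m - st m r..m}" using eq c Tm by simp
  show "1 \<le> st m r" using c Tm by simp
  show "st m r \<le> Suc m" using c by simp
qed

lemma sum_step:
  assumes r: "r \<in> Rk m" and m1: "m \<ge> 1"
  shows "(\<Sum>p\<in>{p. p \<le> m \<and> good r m p}. f (st (Suc m) (ins m r p))) = op (Suc m) f (st m r)"
proof -
  define s where "s = st m r"
  define T where "T = Suc m - s"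
  have S: "{p. p \<le> m \<and> good r m p} = {T..m}" using S_interval(1)[OF r] by (simp add: T_def s_def)
  have s1: "1 \<le> s" "s \<le> Suc m" using S_interval(2,3)[OF r] by (simp_all add: s_def)
  have Tm: "T \<le> m" using s1 by (simp add: T_def)
  have gd: "good r m p" if "p \<in> {T..m}" for p using that S by blast
  have split: "(\<Sum>p\<in>{T..m}. g p) = (\<Sum>p\<in>{T..<m}. g p) + g m" for g :: "nat \<Rightarrow> nat"
  proof -
    have "{T..m} = {T..<Suc m}" by auto
    then show ?thesis using Tm by (simp add: sum.atLeastLessThan_Suc)
  qed
  have sti: "st (Suc m) (ins m r p) = (if even (Suc m) then (if p < m then 1 else s + 1)
                                  else (if p < m then Suc m - p else 2))" if "p \<in> {T..m}" for p
    using st_ins[OF r m1 _ gd[OF that]] that by (simp add: s_def)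
  show ?thesis
  proof (cases "even (Suc m)")
    case ev: True
    have "(\<Sum>p\<in>{T..m}. f (st (Suc m) (ins m r p))) = (\<Sum>p\<in>{T..m}. (if p < m then f 1 else f (s + 1)))"
    proof (rule sum.cong[OF refl])
      fix p assume pT: "p \<in> {T..m}"
      have e: "st (Suc m) (ins m r p) = (if p < m then 1 else s + 1)"
        using sti[OF pT] ev by (simp only: if_True)
      show "f (st (Suc m) (ins m r p)) = (if p < m then f 1 else f (s + 1))"
        unfolding e by simp
    qed
    also have "\<dots> = (\<Sum>p\<in>{T..<m}. (if p < m then f 1 else f (s + 1))) + f (s + 1)" by (simp add: split)
    also have "(\<Sum>p\<in>{T..<m}. (if p < m then f 1 else f (s + 1))) = (\<Sum>p\<in>{T..<m}. f 1)"
      by (rule sum.cong) auto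
    also have "\<dots> = (s - 1) * f 1" using s1 by (simp add: T_def)
    finally show ?thesis unfolding S using ev by (simp add: op_def s_def)
  next
    case od: False
    have "(\<Sum>p\<in>{T..m}. f (st (Suc m) (ins m r p))) = (\<Sum>p\<in>{T..m}. (if p < m then f (Suc m - p) else f 2))"
    proof (rule sum.cong[OF refl])
      fix p assume pT: "p \<in> {T..m}"
      have e: "st (Suc m) (ins m r p) = (if p < m then Suc m - p else 2)"
        using sti[OF pT] od by (simp only: if_False)
      show "f (st (Suc m) (ins m r p)) = (if p < m then f (Suc m - p) else f 2)"
        unfolding e by simp
    qed
    also have "\<dots> = (\<Sum>p\<in>{T..<m}. (if p < m then f (Suc m - p) else f 2)) + f 2" by (simp add: split)
    also have "(\<Sum>p\<in>{T..<m}. (if p < m then f (Suc m - p) else f 2)) = (\<Sum>p\<in>{T..<m}. f (Suc m - p))"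
      by (rule sum.cong) auto
    also have "\<dots> = (\<Sum>q\<in>{1..<s}. f (q + 1))"
      by (rule sum.reindex_bij_witness[where j="\<lambda>p. m - p" and i="\<lambda>q. m - q"])
         (use s1 in \<open>auto simp: T_def Suc_diff_le\<close>)
    finally show ?thesis unfolding S using od by (simp add: op_def s_def)
  qed
qed

definition V :: "nat \<Rightarrow> (nat \<Rightarrow> nat) set" where
  "V n = {r \<in> Rk n. valid n r}"

lemma finite_Rk: "finite (Rk n)"
proof (rule finite_subset)
  show "Rk n \<subseteq> {f. \<forall>x. (x \<in> {1..n} \<longrightarrow> f x \<in> {1..n}) \<and> (x \<notin> {1..n} \<longrightarrow> f x = 0)}"
    unfolding Rk_def bij_betw_def by auto
  show "finite {f. \<forall>x. (x \<in> {1..n} \<longrightarrow> f x \<in> {1..n}) \<and> (x \<notin> {1..n} \<longrightarrow> f x = (0::nat))}"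
    by (rule finite_set_of_finite_funs) auto
qed

lemma finite_V: "finite (V n)"
  unfolding V_def using finite_Rk by simp

lemma sum_V:
  fixes F :: "(nat \<Rightarrow> nat) \<Rightarrow> nat"
  shows "(\<Sum>r'\<in>V (Suc m). F r') = (\<Sum>r\<in>V m. \<Sum>p\<in>{p. p \<le> m \<and> good r m p}. F (ins m r p))"
proof -
  let ?Sig = "Sigma (V m) (\<lambda>r. {p. p \<le> m \<and> good r m p})"
  let ?h = "\<lambda>(r, p). ins m r p"
  have inj: "inj_on ?h ?Sig"
  proof (rule inj_onI)
    fix a b assume a: "a \<in> ?Sig" and b: "b \<in> ?Sig" and e: "?h a = ?h b"
    obtain r1 p1 where a': "a = (r1, p1)" by (cases a)
    obtain r2 p2 where b': "b = (r2, p2)" by (cases b)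
    have r1: "r1 \<in> Rk m" "p1 \<le> m" using a a' by (auto simp: V_def)
    have r2: "r2 \<in> Rk m" "p2 \<le> m" using b b' by (auto simp: V_def)
    have e': "ins m r1 p1 = ins m r2 p2" using e a' b' by simp
    have "r1 = r2" using restr_ins[OF r1] restr_ins[OF r2] e' by metis
    moreover have "p1 = p2" using ins_top[of m r1 p1] ins_top[of m r2 p2] e' by simp
    ultimately show "a = b" using a' b' by simp
  qed
  have img: "?h ` ?Sig = V (Suc m)"
  proof (intro set_eqI iffI)
    fix x assume "x \<in> ?h ` ?Sig"
    then obtain r p where rp: "(r, p) \<in> ?Sig" "x = ins m r p" by auto
    have r: "r \<in> Rk m" "valid m r" "p \<le> m" "good r m p" using rp by (auto simp: V_def)
    show "x \<in> V (Suc m)" using rp(2) ins_Rk[OF r(1,3)] valid_ins[OF r(1,3)] r by (simp add: V_def)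
  next
    fix x assume x: "x \<in> V (Suc m)"
    then have xR: "x \<in> Rk (Suc m)" and xv: "valid (Suc m) x" by (auto simp: V_def)
    define r where "r = restr m x"
    define p where "p = x (Suc m) - 1"
    have rR: "r \<in> Rk m" unfolding r_def by (rule restr_Rk[OF xR])
    have pm: "p \<le> m" unfolding p_def by (rule ins_restr(2)[OF xR])
    have xe: "x = ins m r p" unfolding r_def p_def using ins_restr(1)[OF xR] by simp
    have "valid m r \<and> good r m p" using valid_ins[OF rR pm] xv xe by simp
    then have "(r, p) \<in> ?Sig" using rR pm by (simp add: V_def)
    then show "x \<in> ?h ` ?Sig" using xe by force
  qed
  have "(\<Sum>r'\<in>V (Suc m). F r') = (\<Sum>r'\<in>?h ` ?Sig. F r')" using img by simp
  also have "\<dots> = (\<Sum>x\<in>?Sig. F (?h x))" using inj by (simp add: sum.reindex)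
  also have "\<dots> = (\<Sum>(r, p)\<in>?Sig. F (ins m r p))"
    by (rule sum.cong) auto
  also have "\<dots> = (\<Sum>r\<in>V m. \<Sum>p\<in>{p. p \<le> m \<and> good r m p}. F (ins m r p))"
    by (rule sum.Sigma[symmetric]) (auto simp: finite_V)
  finally show ?thesis .
qed

lemma V1: "V 1 = {(\<lambda>x. if x = 1 then 1 else 0)}"
proof (intro set_eqI iffI)
  fix r assume "r \<in> V 1"
  then have r: "r \<in> Rk 1" by (simp add: V_def)
  have "r x = (if x = 1 then 1 else 0)" for x
  proof (cases "x = 1")
    case True then show ?thesis using Rk_range[OF r, of 1] by simp
  next
    case False then show ?thesis using Rk_out[OF r, of x] by simp
  qed
  then show "r \<in> {(\<lambda>x. if x = 1 then 1 else 0)}" by auto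
next
  fix r assume "r \<in> {(\<lambda>x. if x = (1::nat) then (1::nat) else 0)}"
  then have re: "r = (\<lambda>x. if x = 1 then 1 else 0)" by simp
  have "r \<in> Rk 1" unfolding re by (rule Rk_intro) auto
  moreover have "valid 1 r" unfolding valid_def by auto
  ultimately show "r \<in> V 1" by (simp add: V_def)
qed

lemma st1: "st 1 r = 2"
proof -
  have "good r 1 p" for p unfolding good_def by auto
  then have "{p. p \<le> 1 \<and> good r 1 p} = {0, 1}" by auto
  then show ?thesis by (simp add: st_def)
qed

lemma sum_V_it: "n \<ge> 1 \<Longrightarrow> (\<Sum>r\<in>V n. f (st n r)) = it n f"
proof (induction n arbitrary: f rule: nat_induct_at_least)
  case base
  have "V (Suc 0) = {(\<lambda>x. if x = 1 then 1 else 0)}" using V1 by simp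
  moreover have "st (Suc 0) r = 2" for r using st1 by simp
  ultimately show ?case by (simp add: it.simps)
next
  case (Suc m)
  have "(\<Sum>r\<in>V (Suc m). f (st (Suc m) r)) = (\<Sum>r\<in>V m. \<Sum>p\<in>{p. p \<le> m \<and> good r m p}. f (st (Suc m) (ins m r p)))"
    by (rule sum_V)
  also have "\<dots> = (\<Sum>r\<in>V m. op (Suc m) f (st m r))"
    by (rule sum.cong) (auto simp: V_def intro: sum_step Suc.hyps)
  also have "\<dots> = it m (op (Suc m) f)" by (rule Suc.IH)
  also have "\<dots> = it (Suc m) f" using it_Suc[OF Suc.hyps] by simp
  finally show ?case .
qed

lemma card_V: "n \<ge> 1 \<Longrightarrow> card (V n) = it n (\<lambda>_. 1)"
  using sum_V_it[of n "\<lambda>_. 1"] by simp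

definition relo :: "nat \<Rightarrow> (nat \<Rightarrow> nat) \<Rightarrow> (nat \<times> nat) set" where
  "relo n r = {(x, y). x \<in> {1..n} \<and> y \<in> {1..n} \<and> r x \<le> r y}"

lemma relo_lin: "r \<in> Rk n \<Longrightarrow> linear_order_on {1..n} (relo n r)"
  unfolding linear_order_on_def partial_order_on_def preorder_on_def refl_on_def trans_on_def
    antisym_on_def total_on_def relo_def
  by (auto dest: Rk_inj)

lemma rank_card:
  assumes r: "r \<in> Rk n" and x: "x \<in> {1..n}"
  shows "r x = card {y \<in> {1..n}. r y \<le> r x}"
proof -
  have bij: "bij_betw r {1..n} {1..n}" using r by (simp add: Rk_def)
  have inj: "inj_on r {y \<in> {1..n}. r y \<le> r x}"
    using bij unfolding bij_betw_def by (auto intro: inj_on_subset)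
  have "r ` {y \<in> {1..n}. r y \<le> r x} = {1..r x}"
  proof (intro set_eqI iffI)
    fix v assume "v \<in> r ` {y \<in> {1..n}. r y \<le> r x}"
    then show "v \<in> {1..r x}" using bij unfolding bij_betw_def by auto
  next
    fix v assume v: "v \<in> {1..r x}"
    have "r x \<le> n" using Rk_range[OF r] x by auto
    then obtain y where "1 \<le> y" "y \<le> n" "r y = v" using Rk_surj[OF r, of v] v by auto
    then show "v \<in> r ` {y \<in> {1..n}. r y \<le> r x}" using v by auto
  qed
  then have "card {y \<in> {1..n}. r y \<le> r x} = card {1..r x}"
    using card_image[OF inj] by simp
  then show ?thesis by simp
qed

lemma relo_inj: "inj_on (relo n) (Rk n)"
proof (rule inj_onI)
  fix r1 r2 assume r1: "r1 \<in> Rk n" and r2: "r2 \<in> Rk n" and e: "relo n r1 = relo n r2"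
  show "r1 = r2"
  proof (rule ext)
    fix x show "r1 x = r2 x"
    proof (cases "x \<in> {1..n}")
      case True
      have "{y \<in> {1..n}. r1 y \<le> r1 x} = {y. (y, x) \<in> relo n r1}" using True by (auto simp: relo_def)
      moreover have "{y \<in> {1..n}. r2 y \<le> r2 x} = {y. (y, x) \<in> relo n r2}" using True by (auto simp: relo_def)
      ultimately show ?thesis using rank_card[OF r1 True] rank_card[OF r2 True] e by simp
    next
      case False then show ?thesis using Rk_out[OF r1, of x] Rk_out[OF r2, of x] by simp
    qed
  qed
qed

lemma relo_surj:
  assumes q: "linear_order_on {1..n} q"
  shows "\<exists>r\<in>Rk n. q = relo n r"
proof -
  have sub: "q \<subseteq> {1..n} \<times> {1..n}" and refl: "\<And>x. x \<in> {1..n} \<Longrightarrow> (x, x) \<in> q"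
    and tr: "\<And>x y z. (x, y) \<in> q \<Longrightarrow> (y, z) \<in> q \<Longrightarrow> (x, z) \<in> q"
    and anti: "\<And>x y. (x, y) \<in> q \<Longrightarrow> (y, x) \<in> q \<Longrightarrow> x = y"
    and tot: "\<And>x y. x \<in> {1..n} \<Longrightarrow> y \<in> {1..n} \<Longrightarrow> x \<noteq> y \<Longrightarrow> (x, y) \<in> q \<or> (y, x) \<in> q"
    using q unfolding linear_order_on_def partial_order_on_def preorder_on_def refl_on_def trans_on_def
      antisym_on_def total_on_def by blast+
  define D where "D x = {y. (y, x) \<in> q}" for x
  define r where "r x = (if x \<in> {1..n} then card (D x) else 0)" for x
  have Dsub: "D x \<subseteq> {1..n}" for x using sub by (auto simp: D_def)
  have Dfin: "finite (D x)" for x using Dsub by (rule finite_subset) simp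
  have le: "r x \<le> r y" if "(x, y) \<in> q" for x y
  proof -
    have xy: "x \<in> {1..n}" "y \<in> {1..n}" using that sub by auto
    have "D x \<subseteq> D y" using tr that by (auto simp: D_def)
    then show ?thesis using xy Dfin by (simp add: r_def card_mono)
  qed
  have lt: "r y < r x" if "x \<in> {1..n}" "y \<in> {1..n}" "(x, y) \<notin> q" for x y
  proof -
    have "x \<noteq> y" using that refl by auto
    then have yx: "(y, x) \<in> q" using tot that by blast
    have "D y \<subseteq> D x" using tr yx by (auto simp: D_def)
    moreover have "x \<in> D x" "x \<notin> D y" using refl that by (auto simp: D_def)
    ultimately have "D y \<subset> D x" by blast
    then show ?thesis using that Dfin by (simp add: r_def psubset_card_mono)
  qed
  have rR: "r \<in> Rk n"
  proof (rule Rk_intro)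
    fix x assume "\<not> (1 \<le> x \<and> x \<le> n)" then show "r x = 0" by (auto simp: r_def)
  next
    fix x assume x: "1 \<le> x" "x \<le> n"
    have "x \<in> D x" using refl x by (simp add: D_def)
    then have "card (D x) \<ge> 1" using Dfin by (metis One_nat_def Suc_leI card_gt_0_iff empty_iff)
    moreover have "card (D x) \<le> n" using card_mono[OF _ Dsub[of x]] by simp
    ultimately show "1 \<le> r x \<and> r x \<le> n" using x by (simp add: r_def)
  next
    fix x y assume xy: "1 \<le> x" "x \<le> n" "1 \<le> y" "y \<le> n" "r x = r y"
    show "x = y"
    proof (rule ccontr)
      assume ne: "x \<noteq> y"
      then have "(x, y) \<in> q \<or> (y, x) \<in> q" using tot xy by auto
      then show False
      proof
        assume "(x, y) \<in> q"
        then have "(y, x) \<notin> q" using anti ne by blast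
        then have "r x < r y" using lt[of y x] xy by auto
        then show False using xy by simp
      next
        assume "(y, x) \<in> q"
        then have "(x, y) \<notin> q" using anti ne by blast
        then have "r y < r x" using lt[of x y] xy by auto
        then show False using xy by simp
      qed
    qed
  qed
  have "q = relo n r"
  proof (intro set_eqI iffI)
    fix z assume z: "z \<in> q"
    obtain x y where zxy: "z = (x, y)" by (cases z)
    then show "z \<in> relo n r" using z sub le by (auto simp: relo_def)
  next
    fix z assume z: "z \<in> relo n r"
    obtain x y where zxy: "z = (x, y)" by (cases z)
    have xy: "x \<in> {1..n}" "y \<in> {1..n}" "r x \<le> r y" using z zxy by (auto simp: relo_def)
    show "z \<in> q"
    proof (rule ccontr)
      assume "z \<notin> q"
      then have "r y < r x" using lt xy zxy by auto
      then show False using xy by simp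
    qed
  qed
  then show ?thesis using rR by blast
qed

lemma relo_DX:
  assumes r: "r \<in> Rk n"
  shows "relo n r \<in> D_X n (A_n n) \<longleftrightarrow> valid n r"
proof -
  have lt: "(a, b) \<in> relo n r \<longleftrightarrow> r a < r b" if "a \<in> {1..n}" "b \<in> {1..n}" "a \<noteq> b" for a b
  proof -
    have "r a \<noteq> r b" using Rk_inj[OF r, of a b] that by auto
    then show ?thesis using that by (auto simp: relo_def)
  qed
  have A: "j \<in> A_n n \<longleftrightarrow> even j" if "1 \<le> i" "i < j" "j < k" "k \<le> n" for i j k
    using that by (auto simp: A_n_def)
  have "(\<forall>i j k. 1 \<le> i \<and> i < j \<and> j < k \<and> k \<le> n \<longrightarrow>
        (j \<in> A_n n \<longrightarrow> \<not> ((j, i) \<in> relo n r \<and> (k, i) \<in> relo n r)) \<and>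
        (j \<notin> A_n n \<longrightarrow> \<not> ((k, i) \<in> relo n r \<and> (k, j) \<in> relo n r)))
      \<longleftrightarrow> valid n r"
    unfolding valid_def
  proof (intro iff_allI imp_cong refl)
    fix i j k assume h: "1 \<le> i \<and> i < j \<and> j < k \<and> k \<le> n"
    have m: "i \<in> {1..n}" "j \<in> {1..n}" "k \<in> {1..n}" using h by auto
    have ne: "j \<noteq> i" "k \<noteq> i" "k \<noteq> j" using h by auto
    show "((j \<in> A_n n \<longrightarrow> \<not> ((j, i) \<in> relo n r \<and> (k, i) \<in> relo n r)) \<and>
        (j \<notin> A_n n \<longrightarrow> \<not> ((k, i) \<in> relo n r \<and> (k, j) \<in> relo n r))) \<longleftrightarrow>
        ((even j \<longrightarrow> \<not> (r j < r i \<and> r k < r i)) \<and> (odd j \<longrightarrow> \<not> (r k < r i \<and> r k < r j)))"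
      using A[of i j k] h lt[OF m(2) m(1) ne(1)] lt[OF m(3) m(1) ne(2)] lt[OF m(3) m(2) ne(3)] by auto
  qed
  then show ?thesis using relo_lin[OF r] by (simp add: D_X_def)
qed

lemma DX_image: "D_X n (A_n n) = relo n ` V n"
proof (intro set_eqI iffI)
  fix q assume q: "q \<in> D_X n (A_n n)"
  then have "linear_order_on {1..n} q" by (simp add: D_X_def)
  then obtain r where r: "r \<in> Rk n" "q = relo n r" using relo_surj by blast
  then have "valid n r" using relo_DX[OF r(1)] q by simp
  then show "q \<in> relo n ` V n" using r by (auto simp: V_def)
next
  fix q assume "q \<in> relo n ` V n"
  then obtain r where r: "r \<in> Rk n" "valid n r" "q = relo n r" by (auto simp: V_def)
  then show "q \<in> D_X n (A_n n)" using relo_DX[OF r(1)] by simp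
qed

lemma card_DX: "n \<ge> 1 \<Longrightarrow> card (D_X n (A_n n)) = it n (\<lambda>_. 1)"
proof -
  assume n: "n \<ge> 1"
  have "inj_on (relo n) (V n)" using relo_inj by (rule inj_on_subset) (auto simp: V_def)
  then have "card (relo n ` V n) = card (V n)" by (rule card_image)
  then show ?thesis using DX_image card_V[OF n] by simp
qed

theorem proposition11:
  fixes n :: nat
  assumes "n \<ge> 1"
  shows "odd (card (D_X n (A_n n))) \<longleftrightarrow> (n = 1 \<or> (\<exists>t::nat. t > 1 \<and> n = 2 ^ t))"
  using card_DX[OF assms] it_parity[OF assms] by simp


end
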